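(* A tree $T$ is $\chi_\rho$-critical if and only if it is $\chi_\rho$-vertex-critical.
   Context: A $k$-packing coloring of a graph $G$ is a map $c:V(G)\to\{1,\ldots,k\}$ such that two distinct vertices $u,v$ with $c(u)=c(v)=i$ satisfy $d_G(u,v)>i$ (distance between vertices in different components is infinite); $\chi_\rho(G)$ is the smallest $k$ for which such a coloring exists. $G$ is $\chi_\rho$-critical if $\chi_\rho(H)<\chi_\rho(G)$ for every proper subgraph $H$ of $G$; $G$ is $\chi_\rho$-vertex-critical if $\chi_\rho(G-x)<\chi_\rho(G)$ for every vertex $x\in V(G)$. *)

theory Defs
  imports Main "HOL-Library.Extended_Nat"
begin

definition graph :: "'a set \<Rightarrow> 'a set set \<Rightarrow> bool" where
  "graph V E \<longleftrightarrow> finite V \<and> (\<forall>e\<in>E. \<exists>u v. e = {u, v} \<and> u \<noteq> v \<and> u \<in> V \<and> v \<in> V)"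

definition adj :: "'a set set \<Rightarrow> 'a \<Rightarrow> 'a \<Rightarrow> bool" where
  "adj E u v \<longleftrightarrow> {u, v} \<in> E"

definition walk :: "'a set \<Rightarrow> 'a set set \<Rightarrow> 'a list \<Rightarrow> bool" where
  "walk V E xs \<longleftrightarrow> xs \<noteq> [] \<and> set xs \<subseteq> V \<and>
     (\<forall>i. Suc i < length xs \<longrightarrow> adj E (xs ! i) (xs ! Suc i))"

text \<open>Distance: length of a shortest walk; infinite if there is none.\<close>
definition gdist :: "'a set \<Rightarrow> 'a set set \<Rightarrow> 'a \<Rightarrow> 'a \<Rightarrow> enat" where
  "gdist V E u v = (INF xs \<in> {xs. walk V E xs \<and> hd xs = u \<and> last xs = v}. enat (length xs - 1))"

definition connected_graph :: "'a set \<Rightarrow> 'a set set \<Rightarrow> bool" where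
  "connected_graph V E \<longleftrightarrow> (\<forall>u\<in>V. \<forall>v\<in>V. \<exists>xs. walk V E xs \<and> hd xs = u \<and> last xs = v)"

definition is_cycle :: "'a set \<Rightarrow> 'a set set \<Rightarrow> 'a list \<Rightarrow> bool" where
  "is_cycle V E xs \<longleftrightarrow> walk V E xs \<and> distinct xs \<and> length xs \<ge> 3 \<and> adj E (last xs) (hd xs)"

definition acyclic_graph :: "'a set \<Rightarrow> 'a set set \<Rightarrow> bool" where
  "acyclic_graph V E \<longleftrightarrow> \<not> (\<exists>xs. is_cycle V E xs)"

definition tree :: "'a set \<Rightarrow> 'a set set \<Rightarrow> bool" where
  "tree V E \<longleftrightarrow> graph V E \<and> V \<noteq> {} \<and> connected_graph V E \<and> acyclic_graph V E"

definition packing_coloring :: "'a set \<Rightarrow> 'a set set \<Rightarrow> nat \<Rightarrow> ('a \<Rightarrow> nat) \<Rightarrow> bool" where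
  "packing_coloring V E k c \<longleftrightarrow> (\<forall>v\<in>V. c v \<in> {1..k}) \<and>
     (\<forall>u\<in>V. \<forall>v\<in>V. u \<noteq> v \<and> c u = c v \<longrightarrow> gdist V E u v > enat (c u))"

definition packing_chromatic :: "'a set \<Rightarrow> 'a set set \<Rightarrow> nat" where
  "packing_chromatic V E = (LEAST k. \<exists>c. packing_coloring V E k c)"

definition subgraph :: "'a set \<Rightarrow> 'a set set \<Rightarrow> 'a set \<Rightarrow> 'a set set \<Rightarrow> bool" where
  "subgraph V' E' V E \<longleftrightarrow> V' \<subseteq> V \<and> E' \<subseteq> E \<and> (\<forall>e\<in>E'. e \<subseteq> V')"

definition proper_subgraph :: "'a set \<Rightarrow> 'a set set \<Rightarrow> 'a set \<Rightarrow> 'a set set \<Rightarrow> bool" where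
  "proper_subgraph V' E' V E \<longleftrightarrow> subgraph V' E' V E \<and> (V', E') \<noteq> (V, E)"

definition chi_critical :: "'a set \<Rightarrow> 'a set set \<Rightarrow> bool" where
  "chi_critical V E \<longleftrightarrow> (\<forall>V' E'. proper_subgraph V' E' V E \<longrightarrow>
      packing_chromatic V' E' < packing_chromatic V E)"

definition chi_vertex_critical :: "'a set \<Rightarrow> 'a set set \<Rightarrow> bool" where
  "chi_vertex_critical V E \<longleftrightarrow> (\<forall>x\<in>V.
      packing_chromatic (V - {x}) {e\<in>E. x \<notin> e} < packing_chromatic V E)"

end

theory Submission
  imports Defs
begin

lemma adj_sym: "adj E a b = adj E b a"
  unfolding adj_def by (simp add: insert_commute)

lemma walk_Nil: "\<not> walk V E []"
  unfolding walk_def by simp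

lemma walk_Cons: "walk V E (x # xs) \<longleftrightarrow> x \<in> V \<and> (xs = [] \<or> (adj E x (hd xs) \<and> walk V E xs))"
proof
  assume w: "walk V E (x # xs)"
  show "x \<in> V \<and> (xs = [] \<or> (adj E x (hd xs) \<and> walk V E xs))"
  proof (cases xs)
    case Nil then show ?thesis using w unfolding walk_def by simp
  next
    case (Cons y ys)
    have "adj E x y" using w Cons unfolding walk_def by (metis length_Cons nth_Cons_0 nth_Cons_Suc zero_less_Suc Suc_less_eq)
    moreover have "walk V E xs"
      unfolding walk_def using w Cons unfolding walk_def
      by (metis (no_types, lifting) Suc_less_eq length_Cons list.distinct(1) list.set_intros(2) nth_Cons_Suc subset_code(1) set_subset_Cons subset_trans)
    ultimately show ?thesis using w Cons unfolding walk_def by simp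
  qed
next
  assume h: "x \<in> V \<and> (xs = [] \<or> (adj E x (hd xs) \<and> walk V E xs))"
  show "walk V E (x # xs)"
  proof (cases xs)
    case Nil then show ?thesis using h unfolding walk_def by simp
  next
    case (Cons y ys)
    have a: "adj E x y" "walk V E xs" using h Cons by auto
    show ?thesis unfolding walk_def
    proof (intro conjI allI impI)
      show "x # xs \<noteq> []" by simp
      show "set (x # xs) \<subseteq> V" using h a(2) unfolding walk_def by auto
      fix i assume i: "Suc i < length (x # xs)"
      show "adj E ((x # xs) ! i) ((x # xs) ! Suc i)"
      proof (cases i)
        case 0 then show ?thesis using a Cons by simp
      next
        case (Suc j) then show ?thesis using a(2) i unfolding walk_def by simp
      qed
    qed
  qed
qed

lemma walk_suffix: "walk V E (p @ q) \<Longrightarrow> q \<noteq> [] \<Longrightarrow> walk V E q"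
  by (induction p) (auto simp: walk_Cons)

lemma walk_path:
  "walk V E xs \<Longrightarrow> \<exists>ys. walk V E ys \<and> distinct ys \<and> hd ys = hd xs \<and> last ys = last xs"
proof (induction xs)
  case Nil then show ?case by (simp add: walk_Nil)
next
  case (Cons x xs')
  show ?case
  proof (cases "xs' = []")
    case True then show ?thesis using Cons.prems by (intro exI[of _ "[x]"]) (simp add: walk_Cons)
  next
    case False
    have wx: "x \<in> V" "adj E x (hd xs')" "walk V E xs'" using Cons.prems False by (auto simp: walk_Cons)
    obtain ys' where ys': "walk V E ys'" "distinct ys'" "hd ys' = hd xs'" "last ys' = last xs'"
      using Cons.IH wx(3) by blast
    have ne: "ys' \<noteq> []" using ys'(1) walk_Nil by metis
    show ?thesis
    proof (cases "x \<in> set ys'")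
      case True
      then obtain p q where pq: "ys' = p @ x # q" by (meson split_list)
      have "walk V E (x # q)" using walk_suffix ys'(1) pq by blast
      moreover have "distinct (x # q)" using ys'(2) pq by simp
      moreover have "last (x # q) = last (x # xs')" using ys'(4) pq False by simp
      ultimately show ?thesis by (intro exI[of _ "x # q"]) simp
    next
      case nin: False
      have "walk V E (x # ys')" using wx ys' ne by (simp add: walk_Cons)
      moreover have "distinct (x # ys')" using nin ys'(2) by simp
      moreover have "last (x # ys') = last (x # xs')" using ys'(4) ne False by simp
      ultimately show ?thesis by (intro exI[of _ "x # ys'"]) simp
    qed
  qed
qed

lemma walk_reach: "walk V E xs \<Longrightarrow> y \<in> set xs \<Longrightarrow> (adj E)\<^sup>*\<^sup>* (hd xs) y"
proof (induction xs)
  case Nil then show ?case by (simp add: walk_Nil)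
next
  case (Cons x xs)
  show ?case
  proof (cases "xs = []")
    case True then show ?thesis using Cons.prems by simp
  next
    case False
    then have w: "adj E x (hd xs)" "walk V E xs" using Cons.prems by (auto simp: walk_Cons)
    show ?thesis
    proof (cases "y = x")
      case True then show ?thesis by simp
    next
      case False
      then have "(adj E)\<^sup>*\<^sup>* (hd xs) y" using Cons w by simp
      then show ?thesis using w(1) by (simp add: converse_rtranclp_into_rtranclp)
    qed
  qed
qed

lemma reach_sym: "(adj E)\<^sup>*\<^sup>* a b \<Longrightarrow> (adj E)\<^sup>*\<^sup>* b a"
proof (induction rule: rtranclp_induct)
  case base then show ?case by simp
next
  case (step y z)
  then have "adj E z y" using adj_sym by metis
  then show ?case using step.IH by (simp add: converse_rtranclp_into_rtranclp)
qed

lemma reach_walk: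
  assumes "(adj E)\<^sup>*\<^sup>* a b" "b \<in> V" "\<forall>f\<in>E. f \<subseteq> V"
  shows "\<exists>xs. walk V E xs \<and> hd xs = a \<and> last xs = b"
  using assms(1)
proof (induction rule: converse_rtranclp_induct)
  case base then show ?case using assms(2) by (intro exI[of _ "[b]"]) (simp add: walk_Cons)
next
  case (step y z)
  then obtain xs where xs: "walk V E xs" "hd xs = z" "last xs = b" by blast
  have ne: "xs \<noteq> []" using xs(1) walk_Nil by metis
  have "y \<in> V" using step(1) assms(3) unfolding adj_def by blast
  then have "walk V E (y # xs)" using xs ne step(1) by (simp add: walk_Cons)
  then show ?case using xs ne by (intro exI[of _ "y # xs"]) simp
qed

lemma walk_mono: "walk V E xs \<Longrightarrow> V \<subseteq> V' \<Longrightarrow> E \<subseteq> E' \<Longrightarrow> walk V' E' xs"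
  unfolding walk_def adj_def by blast

lemma gdist_mono:
  assumes "\<And>xs. walk V1 E1 xs \<Longrightarrow> hd xs = a \<Longrightarrow> last xs = b \<Longrightarrow> walk V2 E2 xs"
  shows "gdist V2 E2 a b \<le> gdist V1 E1 a b"
  unfolding gdist_def
  by (rule INF_superset_mono) (use assms in auto)

lemma gdist_none:
  assumes "\<And>xs. walk V E xs \<Longrightarrow> hd xs = a \<Longrightarrow> last xs = b \<Longrightarrow> False"
  shows "gdist V E a b = \<infinity>"
proof -
  have eq: "{xs. walk V E xs \<and> hd xs = a \<and> last xs = b} = {}" using assms by auto
  show ?thesis unfolding gdist_def eq INF_empty by (simp add: top_enat_def)
qed

lemma coloring_restrict:
  assumes "subgraph V' E' V E" "packing_coloring V E k c"
  shows "packing_coloring V' E' k c"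
proof -
  have s: "V' \<subseteq> V" "E' \<subseteq> E" using assms(1) unfolding subgraph_def by auto
  have "gdist V E u v \<le> gdist V' E' u v" for u v
    by (rule gdist_mono) (use walk_mono s in blast)
  then show ?thesis using assms(2) s unfolding packing_coloring_def
    by (meson less_le_trans subsetD)
qed

lemma coloring_exists:
  assumes "finite V" shows "\<exists>c. packing_coloring V E (card V) c"
proof -
  obtain h where h: "bij_betw h V {0..<card V}" using ex_bij_betw_finite_nat assms by blast
  have "packing_coloring V E (card V) (\<lambda>x. Suc (h x))"
    unfolding packing_coloring_def
  proof (intro conjI ballI impI)
    fix v assume "v \<in> V" then have "h v \<in> {0..<card V}" using h bij_betwE by blast
    then show "Suc (h v) \<in> {1..card V}" by simp
  next
    fix u v assume "u \<in> V" "v \<in> V" "u \<noteq> v \<and> Suc (h u) = Suc (h v)"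
    then have False using h by (auto simp: bij_betw_def inj_on_def)
    then show "enat (Suc (h u)) < gdist V E u v" by simp
  qed
  then show ?thesis by blast
qed

lemma chromatic_le: "packing_coloring V E k c \<Longrightarrow> packing_chromatic V E \<le> k"
  unfolding packing_chromatic_def by (rule Least_le) (rule exI)

lemma chromatic_coloring:
  assumes "finite V" shows "\<exists>c. packing_coloring V E (packing_chromatic V E) c"
proof -
  obtain c where "packing_coloring V E (card V) c" using coloring_exists[OF assms, of E] by (elim exE)
  then have ex: "\<exists>k. \<exists>c. packing_coloring V E k c" by (intro exI)
  show ?thesis unfolding packing_chromatic_def by (rule LeastI_ex[OF ex])
qed

lemma chromatic_mono:
  assumes "subgraph V' E' V E" "finite V"
  shows "packing_chromatic V' E' \<le> packing_chromatic V E"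
proof -
  obtain c where c: "packing_coloring V E (packing_chromatic V E) c"
    using chromatic_coloring[OF assms(2), of E] by (elim exE)
  show ?thesis by (rule chromatic_le[OF coloring_restrict[OF assms(1) c]])
qed

lemma graph_edge_sub: "graph V E \<Longrightarrow> f \<in> E \<Longrightarrow> f \<subseteq> V"
proof -
  assume g: "graph V E" and f: "f \<in> E"
  have "\<forall>e\<in>E. \<exists>u v. e = {u, v} \<and> u \<noteq> v \<and> u \<in> V \<and> v \<in> V" using g unfolding graph_def by (rule conjunct2)
  then obtain a b where "f = {a, b}" "a \<in> V" "b \<in> V" using f by blast
  then show "f \<subseteq> V" by simp
qed

lemma tree_cut:
  assumes g: "graph V E" and ac: "acyclic_graph V E"
    and e: "{u, v} \<in> E" and uv: "u \<noteq> v" and vV: "v \<in> V"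
  shows "\<not> (adj (E - {{u, v}}))\<^sup>*\<^sup>* u v"
proof
  define E0 where "E0 = E - {{u, v}}"
  assume "(adj (E - {{u, v}}))\<^sup>*\<^sup>* u v"
  then have r: "(adj E0)\<^sup>*\<^sup>* u v" unfolding E0_def .
  have Esub: "\<forall>f\<in>E0. f \<subseteq> V" using g graph_edge_sub unfolding E0_def by blast
  obtain xs where xs: "walk V E0 xs" "hd xs = u" "last xs = v"
    using reach_walk[OF r vV Esub] by blast
  obtain ys where ys: "walk V E0 ys" "distinct ys" "hd ys = hd xs" "last ys = last xs"
    using walk_path[OF xs(1)] by blast
  have hu: "hd ys = u" and lv: "last ys = v" using ys(3,4) xs(2,3) by simp_all
  have E0E: "E0 \<subseteq> E" unfolding E0_def by blast
  have cyc: False if l3: "3 \<le> length ys"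
  proof -
    have w: "walk V E ys" using walk_mono[OF ys(1) subset_refl E0E] .
    have "{v, u} = {u, v}" by blast
    then have "adj E (last ys) (hd ys)" using e hu lv unfolding adj_def by simp
    then have "is_cycle V E ys" unfolding is_cycle_def using w ys(2) l3 by blast
    then show False using ac unfolding acyclic_graph_def by blast
  qed
  have ne: "ys \<noteq> []" using ys(1) walk_Nil by blast
  then obtain a r1 where ar: "ys = a # r1" by (cases ys) blast+
  show False
  proof (cases r1)
    case Nil
    then have "hd ys = last ys" using ar by simp
    then show False using hu lv uv by simp
  next
    case (Cons b r2)
    show False
    proof (cases r2)
      case Nil
      then have yy: "ys = [a, b]" using ar Cons by simp
      then have "a = u" "b = v" using hu lv by simp_all
      then have "adj E0 u v" using ys(1) yy by (simp add: walk_Cons)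
      then show False unfolding E0_def adj_def by simp
    next
      case (Cons c r3)
      then have "3 \<le> length ys" using ar \<open>r1 = b # r2\<close> by simp
      then show False by (rule cyc)
    qed
  qed
qed

lemma edge_removal:
  assumes g: "graph V E" and ac: "acyclic_graph V E"
    and e: "{u, v} \<in> E" and uv: "u \<noteq> v" "u \<in> V" "v \<in> V"
    and cu: "packing_chromatic (V - {u}) {f\<in>E. u \<notin> f} < packing_chromatic V E"
    and cv: "packing_chromatic (V - {v}) {f\<in>E. v \<notin> f} < packing_chromatic V E"
  shows "packing_chromatic V (E - {{u, v}}) < packing_chromatic V E"
proof -
  define E0 where "E0 = E - {{u, v}}"
  define R where "R = adj E0"
  define C where "C = {w. R\<^sup>*\<^sup>* u w}"
  have fin: "finite V" using g unfolding graph_def by (rule conjunct1)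
  have Esub: "\<forall>f\<in>E0. f \<subseteq> V" using g graph_edge_sub unfolding E0_def by blast
  have key: "v \<notin> C"
    using tree_cut[OF g ac e uv(1) uv(3)] unfolding C_def R_def E0_def by simp
  have uC: "u \<in> C" unfolding C_def by simp
  obtain c1 where c1: "packing_coloring (V - {v}) {f\<in>E. v \<notin> f} (packing_chromatic (V - {v}) {f\<in>E. v \<notin> f}) c1"
    using chromatic_coloring fin by blast
  obtain c2 where c2: "packing_coloring (V - {u}) {f\<in>E. u \<notin> f} (packing_chromatic (V - {u}) {f\<in>E. u \<notin> f}) c2"
    using chromatic_coloring fin by blast
  define k where "k = max (packing_chromatic (V - {v}) {f\<in>E. v \<notin> f}) (packing_chromatic (V - {u}) {f\<in>E. u \<notin> f})"
  define c where "c w = (if w \<in> C then c1 w else c2 w)" for w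
  have closed: "y \<in> C \<longleftrightarrow> w \<in> C" if "walk V E0 xs" "hd xs = w" "y \<in> set xs" for xs w y
  proof -
    have "R\<^sup>*\<^sup>* w y" using walk_reach that unfolding R_def by metis
    moreover have "R\<^sup>*\<^sup>* y w" using calculation reach_sym unfolding R_def by metis
    ultimately have "R\<^sup>*\<^sup>* u y \<longleftrightarrow> R\<^sup>*\<^sup>* u w" using rtranclp_trans[of R u w y] rtranclp_trans[of R u y w] by blast
    then show ?thesis unfolding C_def by simp
  qed
  have transfer: "walk (V - {x}) {f\<in>E. x \<notin> f} xs" if "walk V E0 xs" "x \<notin> set xs" for x xs
  proof -
    have w: "xs \<noteq> []" "set xs \<subseteq> V" "\<And>i. Suc i < length xs \<Longrightarrow> {xs ! i, xs ! Suc i} \<in> E0"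
      using that(1) unfolding walk_def adj_def by auto
    show ?thesis unfolding walk_def adj_def
    proof (intro conjI allI impI)
      show "xs \<noteq> []" by fact
      show "set xs \<subseteq> V - {x}" using w(2) that(2) by blast
      fix i assume i: "Suc i < length xs"
      have "xs ! i \<in> set xs" "xs ! Suc i \<in> set xs" using i by auto
      then have "x \<notin> {xs ! i, xs ! Suc i}" using that(2) by auto
      then show "{xs ! i, xs ! Suc i} \<in> {f \<in> E. x \<notin> f}" using w(3)[OF i] unfolding E0_def by blast
    qed
  qed
  have "packing_coloring V E0 k c"
    unfolding packing_coloring_def
  proof (intro conjI ballI impI)
    fix w assume w: "w \<in> V"
    show "c w \<in> {1..k}"
    proof (cases "w \<in> C")
      case True then have "w \<noteq> v" using key by blast
      then have "c1 w \<in> {1..packing_chromatic (V - {v}) {f\<in>E. v \<notin> f}}"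
        using c1 w unfolding packing_coloring_def by blast
      then show ?thesis using True unfolding c_def k_def by auto
    next
      case False then have "w \<noteq> u" using uC by blast
      then have "c2 w \<in> {1..packing_chromatic (V - {u}) {f\<in>E. u \<notin> f}}"
        using c2 w unfolding packing_coloring_def by blast
      then show ?thesis using False unfolding c_def k_def by auto
    qed
  next
    fix w w' assume w: "w \<in> V" "w' \<in> V" "w \<noteq> w' \<and> c w = c w'"
    show "enat (c w) < gdist V E0 w w'"
    proof (cases "w \<in> C \<longleftrightarrow> w' \<in> C")
      case False
      have "gdist V E0 w w' = \<infinity>"
      proof (rule gdist_none)
        fix xs assume "walk V E0 xs" "hd xs = w" "last xs = w'"
        then have "w' \<in> set xs" using walk_Nil by (metis last_in_set)
        then have "w' \<in> C \<longleftrightarrow> w \<in> C" using closed \<open>walk V E0 xs\<close> \<open>hd xs = w\<close> by blast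
        then show False using False by blast
      qed
      then show ?thesis by simp
    next
      case True
      show ?thesis
      proof (cases "w \<in> C")
        case wC: True
        then have "w' \<in> C" using True by blast
        then have vv: "w \<in> V - {v}" "w' \<in> V - {v}" using wC key w by auto
        have eqc: "c1 w = c1 w'" using w(3) wC \<open>w' \<in> C\<close> unfolding c_def by simp
        have "\<forall>x\<in>V - {v}. \<forall>y\<in>V - {v}. x \<noteq> y \<and> c1 x = c1 y \<longrightarrow> enat (c1 x) < gdist (V - {v}) {f\<in>E. v \<notin> f} x y"
          using c1 unfolding packing_coloring_def by blast
        then have "enat (c1 w) < gdist (V - {v}) {f\<in>E. v \<notin> f} w w'"
          using vv w(3) eqc by blast
        also have "\<dots> \<le> gdist V E0 w w'"
        proof (rule gdist_mono)
          fix xs assume xs: "walk V E0 xs" "hd xs = w" "last xs = w'"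
          have "v \<notin> set xs" using closed[OF xs(1,2)] wC key by blast
          then show "walk (V - {v}) {f\<in>E. v \<notin> f} xs" using transfer xs by blast
        qed
        finally show ?thesis using wC unfolding c_def by simp
      next
        case wC: False
        then have "w' \<notin> C" using True by blast
        then have vv: "w \<in> V - {u}" "w' \<in> V - {u}" using wC uC w by auto
        have eqc: "c2 w = c2 w'" using w(3) wC \<open>w' \<notin> C\<close> unfolding c_def by simp
        have "\<forall>x\<in>V - {u}. \<forall>y\<in>V - {u}. x \<noteq> y \<and> c2 x = c2 y \<longrightarrow> enat (c2 x) < gdist (V - {u}) {f\<in>E. u \<notin> f} x y"
          using c2 unfolding packing_coloring_def by blast
        then have "enat (c2 w) < gdist (V - {u}) {f\<in>E. u \<notin> f} w w'"
          using vv w(3) eqc by blast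
        also have "\<dots> \<le> gdist V E0 w w'"
        proof (rule gdist_mono)
          fix xs assume xs: "walk V E0 xs" "hd xs = w" "last xs = w'"
          have "u \<notin> set xs" using closed[OF xs(1,2)] wC uC by blast
          then show "walk (V - {u}) {f\<in>E. u \<notin> f} xs" using transfer xs by blast
        qed
        finally show ?thesis using wC unfolding c_def by simp
      qed
    qed
  qed
  then have "packing_chromatic V E0 \<le> k" by (rule chromatic_le)
  also have "k < packing_chromatic V E" using cu cv unfolding k_def by simp
  finally show ?thesis unfolding E0_def .
qed

theorem theorem3p5:
  fixes V :: "'a set" and E :: "'a set set"
  assumes "tree V E"
  shows "chi_critical V E \<longleftrightarrow> chi_vertex_critical V E"
proof -
  have g: "graph V E" and ac: "acyclic_graph V E" and ne: "V \<noteq> {}"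
    using assms unfolding tree_def by auto
  have fin: "finite V" using g unfolding graph_def by (rule conjunct1)
  have subx: "subgraph (V - {x}) {e\<in>E. x \<notin> e} V E" for x
    unfolding subgraph_def using graph_edge_sub[OF g] by blast
  show ?thesis
  proof
    assume "chi_critical V E"
    then show "chi_vertex_critical V E"
      unfolding chi_vertex_critical_def
    proof (intro ballI)
      fix x assume x: "x \<in> V"
      have "proper_subgraph (V - {x}) {e\<in>E. x \<notin> e} V E"
        unfolding proper_subgraph_def using subx x by auto
      then show "packing_chromatic (V - {x}) {e\<in>E. x \<notin> e} < packing_chromatic V E"
        using \<open>chi_critical V E\<close> unfolding chi_critical_def by blast
    qed
  next
    assume vc: "chi_vertex_critical V E"
    show "chi_critical V E"
      unfolding chi_critical_def
    proof (intro allI impI)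
      fix V' E' assume p: "proper_subgraph V' E' V E"
      then have s: "subgraph V' E' V E" and neq: "(V', E') \<noteq> (V, E)"
        unfolding proper_subgraph_def by auto
      show "packing_chromatic V' E' < packing_chromatic V E"
      proof (cases "V' = V")
        case False
        then obtain x where x: "x \<in> V" "x \<notin> V'" using s unfolding subgraph_def by blast
        have "subgraph V' E' (V - {x}) {e\<in>E. x \<notin> e}"
          using s x unfolding subgraph_def by blast
        then have "packing_chromatic V' E' \<le> packing_chromatic (V - {x}) {e\<in>E. x \<notin> e}"
          using chromatic_mono fin by blast
        also have "\<dots> < packing_chromatic V E" using vc x unfolding chi_vertex_critical_def by blast
        finally show ?thesis .
      next
        case True
        then obtain f where f: "f \<in> E" "f \<notin> E'" using s neq unfolding subgraph_def by blast
        have "\<forall>e\<in>E. \<exists>u v. e = {u, v} \<and> u \<noteq> v \<and> u \<in> V \<and> v \<in> V"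
          using g unfolding graph_def by (rule conjunct2)
        then obtain u v where uv: "f = {u, v}" "u \<noteq> v" "u \<in> V" "v \<in> V"
          using f(1) by blast
        have "E' \<subseteq> E - {f}" using s f unfolding subgraph_def by blast
        then have "subgraph V' E' V (E - {{u, v}})" using s True uv(1) unfolding subgraph_def by simp
        then have "packing_chromatic V' E' \<le> packing_chromatic V (E - {{u, v}})"
          using chromatic_mono fin by blast
        also have "\<dots> < packing_chromatic V E"
          using edge_removal[OF g ac _ uv(2-4)] f(1) uv(1,3,4) vc unfolding chi_vertex_critical_def by simp
        finally show ?thesis .
      qed
    qed
  qed
qed

end
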